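(* Let $d$ be a prime and let $\{M_i\}_{i=1}^{d+1}$ be a complete set of $d+1$ pairwise mutually unbiased orthonormal bases of $\mathbb{C}^d$. Assume the extended CQC (ECQC) conjecture holds for this set, i.e. for every state $\sigma_{AB}$ on $\mathbb{C}^d\otimes\mathbb{C}^d$, $$I(A:B)\ \ge\ \min_{\mathcal{S}\subseteq\{1,\dots,d+1\},\,|\mathcal{S}|=d}\ \sum_{i\in\mathcal{S}} I(M_i^A:M_i^B).$$ Then every state $\rho_{AB}$ on $\mathbb{C}^d\otimes\mathbb{C}^d$ satisfies $$\sum_{i=1}^{d+1}H(M_i^AM_i^B)\ \ge\ 2\big((d+1)(\log(d)-1)\big)-I(A:B)-I_{\max}(M^A:M^B),$$ where $I_{\max}(M^A:M^B)=\max_{1\le i\le d+1} I(M_i^A:M_i^B)$.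
   Context: All logarithms are base 2 and $0\log0=0$. Bases $\{|z_i\rangle\}$, $\{|x_j\rangle\}$ of $\mathbb{C}^d$ are mutually unbiased if $|\langle z_i|x_j\rangle|^2=1/d$ for all $i,j$. $H(AB)$, $H(A)$, $H(B)$ are von Neumann entropies of $\rho_{AB}$ and its marginals, $I(A:B)=H(A)+H(B)-H(AB)$. For a basis $M_i=\{|m_j\rangle\}$, $M_i^A,M_i^B$ are the classical outcomes when both parties measure their subsystem in $M_i$, with joint distribution $p(j,k)=\langle m_j\otimes m_k|\rho_{AB}|m_j\otimes m_k\rangle$; $H(M_i^AM_i^B)$ is its Shannon entropy and $I(M_i^A:M_i^B)=H(M_i^A)+H(M_i^B)-H(M_i^AM_i^B)$. *)

theory Defs
  imports "Jordan_Normal_Form.Jordan_Normal_Form" "Jordan_Normal_Form.Schur_Decomposition"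
    "HOL-Computational_Algebra.Polynomial"
begin

definition ent :: "real \<Rightarrow> real" where
  "ent x = (if x \<le> 0 then 0 else - x * log 2 x)"

definition density_matrix :: "nat \<Rightarrow> complex mat \<Rightarrow> bool" where
  "density_matrix n \<rho> \<longleftrightarrow> \<rho> \<in> carrier_mat n n \<and> mat_adjoint \<rho> = \<rho> \<and> (\<Sum>i<n. \<rho> $$ (i, i)) = 1 \<and>
     (\<forall>v \<in> carrier_vec n. Im ((\<rho> *\<^sub>v v) \<bullet>c v) = 0 \<and> Re ((\<rho> *\<^sub>v v) \<bullet>c v) \<ge> 0)"

definition vn_entropy :: "complex mat \<Rightarrow> real" where
  "vn_entropy A = sum_mset (image_mset (\<lambda>z. ent (Re z)) (proots (char_poly A)))"

(* Basis |j>|k> of C^d (x) C^d is indexed by j*d+k. *)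
definition ptrace_B :: "nat \<Rightarrow> complex mat \<Rightarrow> complex mat" where
  "ptrace_B d \<rho> = mat d d (\<lambda>(j, j'). \<Sum>k<d. \<rho> $$ (j*d+k, j'*d+k))"

definition ptrace_A :: "nat \<Rightarrow> complex mat \<Rightarrow> complex mat" where
  "ptrace_A d \<rho> = mat d d (\<lambda>(k, k'). \<Sum>j<d. \<rho> $$ (j*d+k, j*d+k'))"

definition qmi :: "nat \<Rightarrow> complex mat \<Rightarrow> real" where
  "qmi d \<rho> = vn_entropy (ptrace_B d \<rho>) + vn_entropy (ptrace_A d \<rho>) - vn_entropy \<rho>"

definition tensor_vec :: "nat \<Rightarrow> complex vec \<Rightarrow> complex vec \<Rightarrow> complex vec" where
  "tensor_vec d u w = vec (d*d) (\<lambda>n. u $ (n div d) * w $ (n mod d))"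

definition meas_prob :: "nat \<Rightarrow> complex mat \<Rightarrow> (nat \<Rightarrow> complex vec) \<Rightarrow> nat \<Rightarrow> nat \<Rightarrow> real" where
  "meas_prob d \<rho> b j k = Re ((\<rho> *\<^sub>v tensor_vec d (b j) (b k)) \<bullet>c tensor_vec d (b j) (b k))"

definition joint_meas_entropy :: "nat \<Rightarrow> complex mat \<Rightarrow> (nat \<Rightarrow> complex vec) \<Rightarrow> real" where
  "joint_meas_entropy d \<rho> b = (\<Sum>j<d. \<Sum>k<d. ent (meas_prob d \<rho> b j k))"

definition meas_entropy_A :: "nat \<Rightarrow> complex mat \<Rightarrow> (nat \<Rightarrow> complex vec) \<Rightarrow> real" where
  "meas_entropy_A d \<rho> b = (\<Sum>j<d. ent (\<Sum>k<d. meas_prob d \<rho> b j k))"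

definition meas_entropy_B :: "nat \<Rightarrow> complex mat \<Rightarrow> (nat \<Rightarrow> complex vec) \<Rightarrow> real" where
  "meas_entropy_B d \<rho> b = (\<Sum>k<d. ent (\<Sum>j<d. meas_prob d \<rho> b j k))"

definition classical_mi :: "nat \<Rightarrow> complex mat \<Rightarrow> (nat \<Rightarrow> complex vec) \<Rightarrow> real" where
  "classical_mi d \<rho> b = meas_entropy_A d \<rho> b + meas_entropy_B d \<rho> b - joint_meas_entropy d \<rho> b"

definition orthonormal_basis :: "nat \<Rightarrow> (nat \<Rightarrow> complex vec) \<Rightarrow> bool" where
  "orthonormal_basis d b \<longleftrightarrow> (\<forall>j<d. b j \<in> carrier_vec d) \<and>
     (\<forall>j<d. \<forall>k<d. b j \<bullet>c b k = (if j = k then 1 else 0))"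

definition mutually_unbiased :: "nat \<Rightarrow> (nat \<Rightarrow> complex vec) \<Rightarrow> (nat \<Rightarrow> complex vec) \<Rightarrow> bool" where
  "mutually_unbiased d b c \<longleftrightarrow> (\<forall>j<d. \<forall>k<d. (cmod (b j \<bullet>c c k))^2 = 1 / real d)"

end

theory Submission
  imports Defs
begin

lemma cscalar_expand:
  assumes "v \<in> carrier_vec n" "w \<in> carrier_vec n"
  shows "v \<bullet>c w = (\<Sum>i<n. v $ i * cnj (w $ i))"
  using assms unfolding scalar_prod_def
  by (auto simp: atLeast0LessThan intro!: sum.cong)

lemma qf_expand:
  assumes "A \<in> carrier_mat n n" "t \<in> carrier_vec n"
  shows "(A *\<^sub>v t) \<bullet>c t = (\<Sum>a<n. \<Sum>b<n. cnj (t$a) * A$$(a,b) * t$b)"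
proof -
  have "(A *\<^sub>v t) \<bullet>c t = (\<Sum>a<n. (A *\<^sub>v t) $ a * cnj (t $ a))"
    using assms by (intro cscalar_expand) auto
  also have "\<dots> = (\<Sum>a<n. \<Sum>b<n. cnj (t$a) * A$$(a,b) * t$b)"
    using assms
    by (auto simp: scalar_prod_def atLeast0LessThan sum_distrib_right sum_distrib_left mult.commute mult.left_commute intro!: sum.cong)
  finally show ?thesis .
qed

lemma completeness:
  assumes ob: "orthonormal_basis d b" and a: "a<d" "a'<d"
  shows "(\<Sum>j<d. b j $ a * cnj (b j $ a')) = (if a = a' then 1 else 0)"
proof -
  define U where "U = mat d d (\<lambda>(a,j). b j $ a)"
  define V where "V = mat d d (\<lambda>(j,a). cnj (b j $ a))"
  have U: "U \<in> carrier_mat d d" and V: "V \<in> carrier_mat d d" unfolding U_def V_def by auto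
  have "V * U = 1\<^sub>m d"
  proof (rule eq_matI)
    fix j k assume jk: "j < dim_row (1\<^sub>m d :: complex mat)" "k < dim_col (1\<^sub>m d :: complex mat)"
    hence jk': "j<d" "k<d" by auto
    have "(V*U) $$ (j,k) = (\<Sum>a<d. cnj (b j $ a) * b k $ a)"
      using jk' unfolding U_def V_def by (auto simp: scalar_prod_def atLeast0LessThan intro!: sum.cong)
    also have "\<dots> = b k \<bullet>c b j"
      using ob jk' unfolding orthonormal_basis_def
      by (subst cscalar_expand[of _ d]) (auto simp: mult.commute)
    also have "\<dots> = 1\<^sub>m d $$ (j,k)" using ob jk' unfolding orthonormal_basis_def by auto
    finally show "(V*U) $$ (j,k) = 1\<^sub>m d $$ (j,k)" .
  qed (auto simp: U_def V_def)
  hence "U * V = 1\<^sub>m d" using mat_mult_left_right_inverse[OF V U] by auto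
  hence "(U*V) $$ (a,a') = 1\<^sub>m d $$ (a,a')" by simp
  moreover have "(U*V) $$ (a,a') = (\<Sum>j<d. b j $ a * cnj (b j $ a'))"
    using a unfolding U_def V_def by (auto simp: scalar_prod_def atLeast0LessThan intro!: sum.cong)
  ultimately show ?thesis using a by auto
qed

lemma sum_split_mult:
  fixes f :: "nat \<Rightarrow> 'a::comm_monoid_add"
  shows "(\<Sum>n<m*d. f n) = (\<Sum>a<m. \<Sum>c<d. f (a*d+c))"
proof (induction m)
  case 0 then show ?case by simp
next
  case (Suc m)
  have "{..<Suc m * d} = {..<m*d} \<union> {m*d..<m*d+d}" by auto
  hence "(\<Sum>n<Suc m*d. f n) = (\<Sum>n<m*d. f n) + (\<Sum>n\<in>{m*d..<m*d+d}. f n)"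
    by (simp add: sum.union_disjoint ivl_disj_int)
  also have "(\<Sum>n\<in>{m*d..<m*d+d}. f n) = (\<Sum>c<d. f (m*d+c))"
    using sum.shift_bounds_nat_ivl[of f 0 "m*d" d]
    by (simp add: add.commute lessThan_atLeast0)
  finally show ?case using Suc by simp
qed

lemma divmod_helper: "(c::nat) < d \<Longrightarrow> (a*d+c) div d = a \<and> (a*d+c) mod d = c"
  by auto

definition qform :: "nat \<Rightarrow> (nat \<Rightarrow> nat \<Rightarrow> complex) \<Rightarrow> (nat \<Rightarrow> complex) \<Rightarrow> complex" where
  "qform d R u = (\<Sum>a<d. \<Sum>a'<d. cnj (u a) * R a a' * u a')"

definition RA :: "nat \<Rightarrow> complex mat \<Rightarrow> nat \<Rightarrow> nat \<Rightarrow> complex" where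
  "RA d \<rho> a a' = (\<Sum>c<d. \<rho> $$ (a*d+c, a'*d+c))"

definition RB :: "nat \<Rightarrow> complex mat \<Rightarrow> nat \<Rightarrow> nat \<Rightarrow> complex" where
  "RB d \<rho> b b' = (\<Sum>a<d. \<rho> $$ (a*d+b, a*d+b'))"

lemma meas_prob_expand:
  assumes "\<rho> \<in> carrier_mat (d*d) (d*d)"
  shows "meas_prob d \<rho> b j k = Re (\<Sum>a<d. \<Sum>c<d. \<Sum>a'<d. \<Sum>c'<d.
     cnj (b j $ a) * cnj (b k $ c) * \<rho> $$ (a*d+c, a'*d+c') * (b j $ a') * (b k $ c'))"
proof -
  let ?t = "tensor_vec d (b j) (b k)"
  have "(\<rho> *\<^sub>v ?t) \<bullet>c ?t = (\<Sum>n<d*d. \<Sum>n'<d*d. cnj (?t$n) * \<rho>$$(n,n') * ?t$n')"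
    using assms by (intro qf_expand) (auto simp: tensor_vec_def)
  also have "\<dots> = (\<Sum>a<d. \<Sum>c<d. \<Sum>n'<d*d. cnj (?t$(a*d+c)) * \<rho>$$(a*d+c,n') * ?t$n')"
    by (rule sum_split_mult)
  also have "\<dots> = (\<Sum>a<d. \<Sum>c<d. \<Sum>a'<d. \<Sum>c'<d. cnj (?t$(a*d+c)) * \<rho>$$(a*d+c,a'*d+c') * ?t$(a'*d+c'))"
    by (subst sum_split_mult) simp
  also have "\<dots> = (\<Sum>a<d. \<Sum>c<d. \<Sum>a'<d. \<Sum>c'<d.
     cnj (b j $ a) * cnj (b k $ c) * \<rho> $$ (a*d+c, a'*d+c') * (b j $ a') * (b k $ c'))"
  proof (intro sum.cong refl)
    fix a c a' c' assume "a \<in> {..<d}" "c \<in> {..<d}" "a' \<in> {..<d}" "c' \<in> {..<d}"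
    hence *: "c<d" "c'<d" "a<d" "a'<d" by auto
    have "a*d+c < d*d"
    proof -
      have "a*d+c < a*d+d" using * by simp
      also have "\<dots> = (a+1)*d" by simp
      also have "\<dots> \<le> d*d" using * by (intro mult_le_mono1) simp
      finally show ?thesis .
    qed
    moreover have "a'*d+c' < d*d"
    proof -
      have "a'*d+c' < a'*d+d" using * by simp
      also have "\<dots> = (a'+1)*d" by simp
      also have "\<dots> \<le> d*d" using * by (intro mult_le_mono1) simp
      finally show ?thesis .
    qed
    ultimately show "cnj (?t$(a*d+c)) * \<rho>$$(a*d+c,a'*d+c') * ?t$(a'*d+c') =
     cnj (b j $ a) * cnj (b k $ c) * \<rho> $$ (a*d+c, a'*d+c') * (b j $ a') * (b k $ c')"
      using * by (simp add: tensor_vec_def divmod_helper mult.assoc mult.left_commute)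
  qed
  finally show ?thesis unfolding meas_prob_def by simp
qed

lemma swap5:
  "(\<Sum>k\<in>K. \<Sum>a\<in>A. \<Sum>c\<in>C. \<Sum>a'\<in>A'. \<Sum>c'\<in>C'. G k a c a' c') =
   (\<Sum>a\<in>A. \<Sum>c\<in>C. \<Sum>a'\<in>A'. \<Sum>c'\<in>C'. \<Sum>k\<in>K. G k a c a' c')"
  by (simp only: sum.swap[of _ K])

lemma marginal_A:
  assumes r: "\<rho> \<in> carrier_mat (d*d) (d*d)" and ob: "orthonormal_basis d b"
  shows "(\<Sum>k<d. meas_prob d \<rho> b j k) = Re (qform d (RA d \<rho>) (\<lambda>a. b j $ a))"
proof -
  have "(\<Sum>k<d. meas_prob d \<rho> b j k) = Re (\<Sum>k<d. \<Sum>a<d. \<Sum>c<d. \<Sum>a'<d. \<Sum>c'<d.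
     cnj (b j $ a) * cnj (b k $ c) * \<rho> $$ (a*d+c, a'*d+c') * (b j $ a') * (b k $ c'))"
    using r by (simp add: meas_prob_expand)
  also have "(\<Sum>k<d. \<Sum>a<d. \<Sum>c<d. \<Sum>a'<d. \<Sum>c'<d.
     cnj (b j $ a) * cnj (b k $ c) * \<rho> $$ (a*d+c, a'*d+c') * (b j $ a') * (b k $ c')) =
     (\<Sum>a<d. \<Sum>c<d. \<Sum>a'<d. \<Sum>c'<d. \<Sum>k<d.
     (cnj (b j $ a) * \<rho> $$ (a*d+c, a'*d+c') * (b j $ a')) * (b k $ c' * cnj (b k $ c)))"
    by (subst swap5) (simp add: ac_simps)
  also have "\<dots> = (\<Sum>a<d. \<Sum>c<d. \<Sum>a'<d. \<Sum>c'<d.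
     (cnj (b j $ a) * \<rho> $$ (a*d+c, a'*d+c') * (b j $ a')) * (if c' = c then 1 else 0))"
    by (intro sum.cong refl) (simp add: sum_distrib_left[symmetric] completeness[OF ob])
  also have "\<dots> = (\<Sum>a<d. \<Sum>c<d. \<Sum>a'<d. cnj (b j $ a) * \<rho> $$ (a*d+c, a'*d+c) * (b j $ a'))"
    by (intro sum.cong refl) (simp add: if_distrib cong: if_cong)
  also have "\<dots> = (\<Sum>a<d. \<Sum>a'<d. \<Sum>c<d. cnj (b j $ a) * \<rho> $$ (a*d+c, a'*d+c) * (b j $ a'))"
    by (rule sum.cong[OF refl], rule sum.swap)
  also have "\<dots> = qform d (RA d \<rho>) (\<lambda>a. b j $ a)"
    unfolding qform_def RA_def by (simp add: sum_distrib_left sum_distrib_right)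
  finally show ?thesis .
qed

lemma marginal_B:
  assumes r: "\<rho> \<in> carrier_mat (d*d) (d*d)" and ob: "orthonormal_basis d b"
  shows "(\<Sum>j<d. meas_prob d \<rho> b j k) = Re (qform d (RB d \<rho>) (\<lambda>a. b k $ a))"
proof -
  have "(\<Sum>j<d. meas_prob d \<rho> b j k) = Re (\<Sum>j<d. \<Sum>a<d. \<Sum>c<d. \<Sum>a'<d. \<Sum>c'<d.
     cnj (b j $ a) * cnj (b k $ c) * \<rho> $$ (a*d+c, a'*d+c') * (b j $ a') * (b k $ c'))"
    using r by (simp add: meas_prob_expand)
  also have "(\<Sum>j<d. \<Sum>a<d. \<Sum>c<d. \<Sum>a'<d. \<Sum>c'<d.
     cnj (b j $ a) * cnj (b k $ c) * \<rho> $$ (a*d+c, a'*d+c') * (b j $ a') * (b k $ c')) =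
     (\<Sum>a<d. \<Sum>c<d. \<Sum>a'<d. \<Sum>c'<d. \<Sum>j<d.
     (cnj (b k $ c) * \<rho> $$ (a*d+c, a'*d+c') * (b k $ c')) * (b j $ a' * cnj (b j $ a)))"
    by (subst swap5) (simp add: ac_simps)
  also have "\<dots> = (\<Sum>a<d. \<Sum>c<d. \<Sum>a'<d. \<Sum>c'<d.
     (cnj (b k $ c) * \<rho> $$ (a*d+c, a'*d+c') * (b k $ c')) * (if a' = a then 1 else 0))"
    by (intro sum.cong refl) (simp add: sum_distrib_left[symmetric] completeness[OF ob])
  also have "\<dots> = (\<Sum>a<d. \<Sum>c<d. \<Sum>a'<d. \<Sum>c'<d.
     (if a' = a then cnj (b k $ c) * \<rho> $$ (a*d+c, a*d+c') * (b k $ c') else 0))"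
    by (intro sum.cong refl) simp
  also have "\<dots> = (\<Sum>a<d. \<Sum>c<d. \<Sum>c'<d. \<Sum>a'<d.
     (if a' = a then cnj (b k $ c) * \<rho> $$ (a*d+c, a*d+c') * (b k $ c') else 0))"
    by (rule sum.cong[OF refl], rule sum.cong[OF refl], rule sum.swap)
  also have "\<dots> = (\<Sum>a<d. \<Sum>c<d. \<Sum>c'<d. cnj (b k $ c) * \<rho> $$ (a*d+c, a*d+c') * (b k $ c'))"
    by (intro sum.cong refl) (simp add: sum.delta)
  also have "\<dots> = (\<Sum>c<d. \<Sum>a<d. \<Sum>c'<d. cnj (b k $ c) * \<rho> $$ (a*d+c, a*d+c') * (b k $ c'))"
    by (rule sum.swap)
  also have "\<dots> = (\<Sum>c<d. \<Sum>c'<d. \<Sum>a<d. cnj (b k $ c) * \<rho> $$ (a*d+c, a*d+c') * (b k $ c'))"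
    by (rule sum.cong[OF refl], rule sum.swap)
  also have "\<dots> = qform d (RB d \<rho>) (\<lambda>a. b k $ a)"
    unfolding qform_def RB_def by (simp add: sum_distrib_left sum_distrib_right)
  finally show ?thesis .
qed

lemma idx_lt: assumes "(c::nat) < d" "a < d" shows "a*d+c < d*d"
proof -
  have "a*d+c < a*d+d" using assms by simp
  also have "\<dots> = (a+1)*d" by simp
  also have "\<dots> \<le> d*d" using assms by (intro mult_le_mono1) simp
  finally show ?thesis .
qed

lemma qf_split:
  assumes r: "\<rho> \<in> carrier_mat (d*d) (d*d)"
  shows "(\<rho> *\<^sub>v vec (d*d) (\<lambda>n. g (n div d) (n mod d))) \<bullet>c vec (d*d) (\<lambda>n. g (n div d) (n mod d)) =
    (\<Sum>a<d. \<Sum>c<d. \<Sum>a'<d. \<Sum>c'<d. cnj (g a c) * \<rho> $$ (a*d+c, a'*d+c') * g a' c')"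
proof -
  let ?t = "vec (d*d) (\<lambda>n. g (n div d) (n mod d))"
  have "(\<rho> *\<^sub>v ?t) \<bullet>c ?t = (\<Sum>n<d*d. \<Sum>n'<d*d. cnj (?t$n) * \<rho>$$(n,n') * ?t$n')"
    using r by (intro qf_expand) auto
  also have "\<dots> = (\<Sum>a<d. \<Sum>c<d. \<Sum>n'<d*d. cnj (?t$(a*d+c)) * \<rho>$$(a*d+c,n') * ?t$n')"
    by (rule sum_split_mult)
  also have "\<dots> = (\<Sum>a<d. \<Sum>c<d. \<Sum>a'<d. \<Sum>c'<d. cnj (?t$(a*d+c)) * \<rho>$$(a*d+c,a'*d+c') * ?t$(a'*d+c'))"
    by (subst sum_split_mult) simp
  also have "\<dots> = (\<Sum>a<d. \<Sum>c<d. \<Sum>a'<d. \<Sum>c'<d. cnj (g a c) * \<rho> $$ (a*d+c, a'*d+c') * g a' c')"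
    by (intro sum.cong refl) (simp add: idx_lt divmod_helper)
  finally show ?thesis .
qed

definition good_state :: "nat \<Rightarrow> (nat \<Rightarrow> nat \<Rightarrow> complex) \<Rightarrow> bool" where
  "good_state d R \<longleftrightarrow> (\<forall>a<d. \<forall>a'<d. R a' a = cnj (R a a')) \<and> (\<forall>u. Re (qform d R u) \<ge> 0)
     \<and> (\<Sum>a<d. R a a) = 1"

lemma adjoint_index:
  assumes "A \<in> carrier_mat n n" "i < n" "j < n"
  shows "mat_adjoint A $$ (i,j) = cnj (A $$ (j,i))"
  using assms by (simp add: mat_adjoint_def mat_of_rows_def)

lemma good_RA:
  assumes dm: "density_matrix (d*d) \<rho>"
  shows "good_state d (RA d \<rho>)"
proof -
  have r: "\<rho> \<in> carrier_mat (d*d) (d*d)" and adj: "mat_adjoint \<rho> = \<rho>"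
    and tr: "(\<Sum>i<d*d. \<rho> $$ (i, i)) = 1"
    and psd: "\<And>v. v \<in> carrier_vec (d*d) \<Longrightarrow> Re ((\<rho> *\<^sub>v v) \<bullet>c v) \<ge> 0"
    using dm unfolding density_matrix_def by auto
  have herm: "\<rho> $$ (m,n) = cnj (\<rho> $$ (n,m))" if "m < d*d" "n < d*d" for m n
    using adjoint_index[OF r that] adj by simp
  have H: "\<forall>a<d. \<forall>a'<d. RA d \<rho> a' a = cnj (RA d \<rho> a a')"
    unfolding RA_def cnj_sum by (intro allI impI sum.cong refl) (rule herm, auto intro: idx_lt)
  have P: "Re (qform d (RA d \<rho>) u) \<ge> 0" for u
  proof -
    define g where "g c = (\<lambda>a (c1::nat). if c1 = c then u a else 0)" for c :: nat
    have "qform d (RA d \<rho>) u = (\<Sum>c<d. \<Sum>a<d. \<Sum>a'<d. cnj (u a) * \<rho> $$ (a*d+c, a'*d+c) * u a')"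
    proof -
      have "qform d (RA d \<rho>) u = (\<Sum>a<d. \<Sum>a'<d. \<Sum>c<d. cnj (u a) * \<rho> $$ (a*d+c, a'*d+c) * u a')"
        unfolding qform_def RA_def by (simp add: sum_distrib_left sum_distrib_right)
      also have "\<dots> = (\<Sum>a<d. \<Sum>c<d. \<Sum>a'<d. cnj (u a) * \<rho> $$ (a*d+c, a'*d+c) * u a')"
        by (rule sum.cong[OF refl], rule sum.swap)
      also have "\<dots> = (\<Sum>c<d. \<Sum>a<d. \<Sum>a'<d. cnj (u a) * \<rho> $$ (a*d+c, a'*d+c) * u a')"
        by (rule sum.swap)
      finally show ?thesis .
    qed
    also have "\<dots> = (\<Sum>c<d. (\<rho> *\<^sub>v vec (d*d) (\<lambda>n. g c (n div d) (n mod d))) \<bullet>c vec (d*d) (\<lambda>n. g c (n div d) (n mod d)))"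
    proof (rule sum.cong[OF refl])
      fix c assume c: "c \<in> {..<d}"
      show "(\<Sum>a<d. \<Sum>a'<d. cnj (u a) * \<rho> $$ (a*d+c, a'*d+c) * u a') =
        (\<rho> *\<^sub>v vec (d*d) (\<lambda>n. g c (n div d) (n mod d))) \<bullet>c vec (d*d) (\<lambda>n. g c (n div d) (n mod d))"
      proof -
        have e: "cnj (g c a c1) * \<rho> $$ (a*d+c1, a'*d+c1') * g c a' c1' =
          (if c1' = c then (if c1 = c then cnj (u a) * \<rho> $$ (a*d+c1, a'*d+c1') * u a' else 0) else 0)"
          for a c1 a' c1' by (simp add: g_def)
        have "(\<rho> *\<^sub>v vec (d*d) (\<lambda>n. g c (n div d) (n mod d))) \<bullet>c vec (d*d) (\<lambda>n. g c (n div d) (n mod d))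
          = (\<Sum>a<d. \<Sum>c1<d. \<Sum>a'<d. \<Sum>c1'<d. cnj (g c a c1) * \<rho> $$ (a*d+c1, a'*d+c1') * g c a' c1')"
          by (rule qf_split[OF r])
        also have "\<dots> = (\<Sum>a<d. \<Sum>a'<d. \<Sum>c1<d. \<Sum>c1'<d. cnj (g c a c1) * \<rho> $$ (a*d+c1, a'*d+c1') * g c a' c1')"
          by (rule sum.cong[OF refl], rule sum.swap)
        also have "\<dots> = (\<Sum>a<d. \<Sum>a'<d. cnj (u a) * \<rho> $$ (a*d+c, a'*d+c) * u a')"
          unfolding e using c by (simp add: sum.delta)
        finally show ?thesis by (rule sym)
      qed
    qed
    finally have "Re (qform d (RA d \<rho>) u) = (\<Sum>c<d. Re ((\<rho> *\<^sub>v vec (d*d) (\<lambda>n. g c (n div d) (n mod d))) \<bullet>c vec (d*d) (\<lambda>n. g c (n div d) (n mod d))))"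
      by (simp only: Re_sum)
    also have "\<dots> \<ge> 0" by (intro sum_nonneg psd) auto
    finally show ?thesis .
  qed
  have T: "(\<Sum>a<d. RA d \<rho> a a) = 1"
    unfolding RA_def using tr sum_split_mult[of "\<lambda>n. \<rho>$$(n,n)" d d] by simp
  show ?thesis unfolding good_state_def using H P T by blast
qed

lemma good_RB:
  assumes dm: "density_matrix (d*d) \<rho>"
  shows "good_state d (RB d \<rho>)"
proof -
  have r: "\<rho> \<in> carrier_mat (d*d) (d*d)" and adj: "mat_adjoint \<rho> = \<rho>"
    and tr: "(\<Sum>i<d*d. \<rho> $$ (i, i)) = 1"
    and psd: "\<And>v. v \<in> carrier_vec (d*d) \<Longrightarrow> Re ((\<rho> *\<^sub>v v) \<bullet>c v) \<ge> 0"
    using dm unfolding density_matrix_def by auto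
  have herm: "\<rho> $$ (m,n) = cnj (\<rho> $$ (n,m))" if "m < d*d" "n < d*d" for m n
    using adjoint_index[OF r that] adj by simp
  have H: "\<forall>a<d. \<forall>a'<d. RB d \<rho> a' a = cnj (RB d \<rho> a a')"
    unfolding RB_def cnj_sum by (intro allI impI sum.cong refl) (rule herm, auto intro: idx_lt)
  have P: "Re (qform d (RB d \<rho>) u) \<ge> 0" for u
  proof -
    define g where "g a = (\<lambda>a1 (c1::nat). if a1 = a then u c1 else 0)" for a :: nat
    have "qform d (RB d \<rho>) u = (\<Sum>a<d. \<Sum>b<d. \<Sum>b'<d. cnj (u b) * \<rho> $$ (a*d+b, a*d+b') * u b')"
    proof -
      have "qform d (RB d \<rho>) u = (\<Sum>b<d. \<Sum>b'<d. \<Sum>a<d. cnj (u b) * \<rho> $$ (a*d+b, a*d+b') * u b')"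
        unfolding qform_def RB_def by (simp add: sum_distrib_left sum_distrib_right)
      also have "\<dots> = (\<Sum>b<d. \<Sum>a<d. \<Sum>b'<d. cnj (u b) * \<rho> $$ (a*d+b, a*d+b') * u b')"
        by (rule sum.cong[OF refl], rule sum.swap)
      also have "\<dots> = (\<Sum>a<d. \<Sum>b<d. \<Sum>b'<d. cnj (u b) * \<rho> $$ (a*d+b, a*d+b') * u b')"
        by (rule sum.swap)
      finally show ?thesis .
    qed
    also have "\<dots> = (\<Sum>a<d. (\<rho> *\<^sub>v vec (d*d) (\<lambda>n. g a (n div d) (n mod d))) \<bullet>c vec (d*d) (\<lambda>n. g a (n div d) (n mod d)))"
    proof (rule sum.cong[OF refl])
      fix a assume a: "a \<in> {..<d}"
      show "(\<Sum>b<d. \<Sum>b'<d. cnj (u b) * \<rho> $$ (a*d+b, a*d+b') * u b') =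
        (\<rho> *\<^sub>v vec (d*d) (\<lambda>n. g a (n div d) (n mod d))) \<bullet>c vec (d*d) (\<lambda>n. g a (n div d) (n mod d))"
      proof -
        have e: "cnj (g a a1 c1) * \<rho> $$ (a1*d+c1, a1'*d+c1') * g a a1' c1' =
          (if a1' = a then (if a1 = a then cnj (u c1) * \<rho> $$ (a1*d+c1, a1'*d+c1') * u c1' else 0) else 0)"
          for a1 c1 a1' c1' by (simp add: g_def)
        have "(\<rho> *\<^sub>v vec (d*d) (\<lambda>n. g a (n div d) (n mod d))) \<bullet>c vec (d*d) (\<lambda>n. g a (n div d) (n mod d))
          = (\<Sum>a1<d. \<Sum>c1<d. \<Sum>a1'<d. \<Sum>c1'<d. cnj (g a a1 c1) * \<rho> $$ (a1*d+c1, a1'*d+c1') * g a a1' c1')"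
          by (rule qf_split[OF r])
        also have "\<dots> = (\<Sum>a1<d. \<Sum>c1<d. \<Sum>c1'<d. \<Sum>a1'<d. cnj (g a a1 c1) * \<rho> $$ (a1*d+c1, a1'*d+c1') * g a a1' c1')"
          by (rule sum.cong[OF refl], rule sum.cong[OF refl], rule sum.swap)
        also have "\<dots> = (\<Sum>c1<d. \<Sum>a1<d. \<Sum>c1'<d. \<Sum>a1'<d. cnj (g a a1 c1) * \<rho> $$ (a1*d+c1, a1'*d+c1') * g a a1' c1')"
          by (rule sum.swap)
        also have "\<dots> = (\<Sum>c1<d. \<Sum>c1'<d. \<Sum>a1<d. \<Sum>a1'<d. cnj (g a a1 c1) * \<rho> $$ (a1*d+c1, a1'*d+c1') * g a a1' c1')"
          by (rule sum.cong[OF refl], rule sum.swap)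
        also have "\<dots> = (\<Sum>b<d. \<Sum>b'<d. cnj (u b) * \<rho> $$ (a*d+b, a*d+b') * u b')"
          unfolding e using a by (simp add: sum.delta)
        finally show ?thesis by (rule sym)
      qed
    qed
    finally have "Re (qform d (RB d \<rho>) u) = (\<Sum>a<d. Re ((\<rho> *\<^sub>v vec (d*d) (\<lambda>n. g a (n div d) (n mod d))) \<bullet>c vec (d*d) (\<lambda>n. g a (n div d) (n mod d))))"
      by (simp only: Re_sum)
    also have "\<dots> \<ge> 0" by (intro sum_nonneg psd) auto
    finally show ?thesis .
  qed
  have T: "(\<Sum>a<d. RB d \<rho> a a) = 1"
  proof -
    have "(\<Sum>a<d. RB d \<rho> a a) = (\<Sum>b<d. \<Sum>a<d. \<rho> $$ (a*d+b, a*d+b))" unfolding RB_def ..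
    also have "\<dots> = (\<Sum>a<d. \<Sum>b<d. \<rho> $$ (a*d+b, a*d+b))" by (rule sum.swap)
    finally show ?thesis using tr sum_split_mult[of "\<lambda>n. \<rho>$$(n,n)" d d] by simp
  qed
  show ?thesis unfolding good_state_def using H P T by blast
qed

lemma swap4:
  "(\<Sum>a\<in>A. \<Sum>b\<in>B. \<Sum>p\<in>P. \<Sum>q\<in>Q. f a b p q) = (\<Sum>p\<in>P. \<Sum>q\<in>Q. \<Sum>a\<in>A. \<Sum>b\<in>B. f a b p q)"
proof -
  have "(\<Sum>a\<in>A. \<Sum>b\<in>B. \<Sum>p\<in>P. \<Sum>q\<in>Q. f a b p q) = (\<Sum>a\<in>A. \<Sum>p\<in>P. \<Sum>b\<in>B. \<Sum>q\<in>Q. f a b p q)"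
    by (rule sum.cong[OF refl], rule sum.swap)
  also have "\<dots> = (\<Sum>a\<in>A. \<Sum>p\<in>P. \<Sum>q\<in>Q. \<Sum>b\<in>B. f a b p q)"
    by (rule sum.cong[OF refl], rule sum.cong[OF refl], rule sum.swap)
  also have "\<dots> = (\<Sum>p\<in>P. \<Sum>a\<in>A. \<Sum>q\<in>Q. \<Sum>b\<in>B. f a b p q)"
    by (rule sum.swap)
  also have "\<dots> = (\<Sum>p\<in>P. \<Sum>q\<in>Q. \<Sum>a\<in>A. \<Sum>b\<in>B. f a b p q)"
    by (rule sum.cong[OF refl], rule sum.swap)
  finally show ?thesis .
qed

lemma swap3:
  "(\<Sum>a\<in>A. \<Sum>b\<in>B. \<Sum>p\<in>P. f a b p) = (\<Sum>p\<in>P. \<Sum>a\<in>A. \<Sum>b\<in>B. f a b p)"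
proof -
  have "(\<Sum>a\<in>A. \<Sum>b\<in>B. \<Sum>p\<in>P. f a b p) = (\<Sum>a\<in>A. \<Sum>p\<in>P. \<Sum>b\<in>B. f a b p)"
    by (rule sum.cong[OF refl], rule sum.swap)
  also have "\<dots> = (\<Sum>p\<in>P. \<Sum>a\<in>A. \<Sum>b\<in>B. f a b p)"
    by (rule sum.swap)
  finally show ?thesis .
qed

lemma norm_sum_nonneg: "0 \<le> Re (\<Sum>a\<in>A. \<Sum>b\<in>B. F a b * cnj (F a b))"
  by (simp add: Re_sum sum_nonneg)

lemma bessel:
  fixes K :: "'p set" and v :: "'p \<Rightarrow> nat \<Rightarrow> complex" and y :: "'p \<Rightarrow> real"
    and g :: "'p \<Rightarrow> 'p \<Rightarrow> real" and R :: "nat \<Rightarrow> nat \<Rightarrow> complex"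
  assumes fin: "finite K" and dpos: "d > 0"
    and ip: "\<And>p q. p\<in>K \<Longrightarrow> q\<in>K \<Longrightarrow>
       (\<Sum>a<d. v p a * cnj (v q a)) * cnj (\<Sum>a<d. v p a * cnj (v q a)) = of_real (g p q)"
    and yg: "\<And>p. p\<in>K \<Longrightarrow> (\<Sum>q\<in>K. y q * g p q) = y p"
    and nrm: "\<And>p. p\<in>K \<Longrightarrow> (\<Sum>a<d. v p a * cnj (v p a)) = 1"
    and sumy: "(\<Sum>p\<in>K. y p) = 0"
    and xdef: "\<And>p. p\<in>K \<Longrightarrow> qform d R (v p) = of_real (y p + 1/d)"
    and tr: "(\<Sum>a<d. R a a) = 1"
  shows "(\<Sum>p\<in>K. (y p)^2) \<le> (\<Sum>a<d. \<Sum>b<d. (cmod (R a b))^2) - 1/d"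
proof -
  define Y where "Y a b = (\<Sum>p\<in>K. of_real (y p) * v p a * cnj (v p b))" for a b
  define W where "W a b = R a b - (if a = b then of_real (1/d) else 0)" for a b
  have cY: "cnj (Y a b) = (\<Sum>q\<in>K. of_real (y q) * cnj (v q a) * v q b)" for a b
    unfolding Y_def by (simp add: cnj_sum)
  have S1: "(\<Sum>a<d. \<Sum>b<d. Y a b * cnj (Y a b)) = of_real (\<Sum>p\<in>K. (y p)^2)"
  proof -
    have "(\<Sum>a<d. \<Sum>b<d. Y a b * cnj (Y a b)) = (\<Sum>a<d. \<Sum>b<d. \<Sum>p\<in>K. \<Sum>q\<in>K.
        of_real (y p * y q) * ((v p a * cnj (v q a)) * (cnj (v p b) * v q b)))"
      unfolding cY unfolding Y_def sum_product by (intro sum.cong refl) (simp add: ac_simps)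
    also have "\<dots> = (\<Sum>p\<in>K. \<Sum>q\<in>K. \<Sum>a<d. \<Sum>b<d.
        of_real (y p * y q) * ((v p a * cnj (v q a)) * (cnj (v p b) * v q b)))"
      by (rule swap4)
    also have "\<dots> = (\<Sum>p\<in>K. \<Sum>q\<in>K. of_real (y p * y q) *
        ((\<Sum>a<d. v p a * cnj (v q a)) * (\<Sum>b<d. cnj (v p b) * v q b)))"
      by (intro sum.cong refl) (simp only: sum_product, simp only: sum_distrib_left)
    also have "\<dots> = (\<Sum>p\<in>K. \<Sum>q\<in>K. of_real (y p * (y q * g p q)))"
    proof (intro sum.cong refl)
      fix p q assume "p \<in> K" "q \<in> K"
      hence "(\<Sum>a<d. v p a * cnj (v q a)) * (\<Sum>b<d. cnj (v p b) * v q b) = of_real (g p q)"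
        using ip[of p q] by (simp add: cnj_sum)
      thus "of_real (y p * y q) * ((\<Sum>a<d. v p a * cnj (v q a)) * (\<Sum>b<d. cnj (v p b) * v q b)) =
        of_real (y p * (y q * g p q))" by simp
    qed
    also have "\<dots> = (\<Sum>p\<in>K. of_real (y p * y p))"
    proof (intro sum.cong refl)
      fix p assume p: "p \<in> K"
      have "(\<Sum>q\<in>K. of_real (y p * (y q * g p q))) = (of_real (y p * (\<Sum>q\<in>K. y q * g p q)) :: complex)"
        by (simp only: of_real_sum sum_distrib_left)
      thus "(\<Sum>q\<in>K. of_real (y p * (y q * g p q))) = (of_real (y p * y p) :: complex)" using yg[OF p] by simp
    qed
    finally show ?thesis by (simp add: power2_eq_square)
  qed
  have S2: "(\<Sum>a<d. \<Sum>b<d. R a b * cnj (Y a b)) = of_real (\<Sum>p\<in>K. y p * (y p + 1/d))"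
  proof -
    have "(\<Sum>a<d. \<Sum>b<d. R a b * cnj (Y a b)) = (\<Sum>a<d. \<Sum>b<d. \<Sum>p\<in>K.
        of_real (y p) * (cnj (v p a) * R a b * v p b))"
      unfolding cY by (simp add: sum_distrib_left ac_simps)
    also have "\<dots> = (\<Sum>p\<in>K. \<Sum>a<d. \<Sum>b<d. of_real (y p) * (cnj (v p a) * R a b * v p b))"
      by (rule swap3)
    also have "\<dots> = (\<Sum>p\<in>K. of_real (y p) * qform d R (v p))"
      unfolding qform_def by (simp add: sum_distrib_left)
    also have "\<dots> = (\<Sum>p\<in>K. of_real (y p * (y p + 1/d)))"
      by (intro sum.cong refl) (simp add: xdef)
    finally show ?thesis by simp
  qed
  have S3: "(\<Sum>a<d. \<Sum>b<d. (if a = b then of_real (1/d) else 0) * cnj (Y a b)) = 0"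
  proof -
    have "(\<Sum>a<d. \<Sum>b<d. (if a = b then of_real (1/d) else 0) * cnj (Y a b)) =
        (\<Sum>a<d. of_real (1/d) * cnj (Y a a))"
      by (intro sum.cong refl) (simp add: if_distrib if_distribR sum.delta cong: if_cong)
    also have "\<dots> = of_real (1/d) * (\<Sum>a<d. \<Sum>p\<in>K. of_real (y p) * (v p a * cnj (v p a)))"
      unfolding cY by (simp add: sum_distrib_left ac_simps)
    also have "\<dots> = of_real (1/d) * (\<Sum>p\<in>K. of_real (y p) * (\<Sum>a<d. v p a * cnj (v p a)))"
      by (subst sum.swap) (simp add: sum_distrib_left)
    also have "\<dots> = of_real (1/d) * of_real (\<Sum>p\<in>K. y p)"
      by (simp add: nrm)
    finally show ?thesis using sumy by simp
  qed
  have S23: "(\<Sum>a<d. \<Sum>b<d. W a b * cnj (Y a b)) = of_real (\<Sum>p\<in>K. (y p)^2)"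
  proof -
    have "(\<Sum>a<d. \<Sum>b<d. W a b * cnj (Y a b)) = (\<Sum>a<d. \<Sum>b<d. R a b * cnj (Y a b))
        - (\<Sum>a<d. \<Sum>b<d. (if a = b then of_real (1/d) else 0) * cnj (Y a b))"
      unfolding W_def by (simp add: left_diff_distrib sum_subtractf)
    also have "\<dots> = of_real (\<Sum>p\<in>K. y p * (y p + 1/d))" using S2 S3 by simp
    also have "(\<Sum>p\<in>K. y p * (y p + 1/d)) = (\<Sum>p\<in>K. (y p)^2) + (\<Sum>p\<in>K. y p) / d"
      by (simp add: algebra_simps power2_eq_square sum.distrib sum_divide_distrib)
    finally show ?thesis using sumy by simp
  qed
  have S4: "Re (\<Sum>a<d. \<Sum>b<d. W a b * cnj (W a b)) = (\<Sum>a<d. \<Sum>b<d. (cmod (R a b))^2) - 1/d"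
  proof -
    have e: "W a b * cnj (W a b) = R a b * cnj (R a b) - (if a = b then of_real (1/d) * (R a b + cnj (R a b)) - of_real (1/d^2) else 0)" for a b
      unfolding W_def by (auto simp: algebra_simps power2_eq_square)
    have "(\<Sum>a<d. \<Sum>b<d. W a b * cnj (W a b)) = (\<Sum>a<d. \<Sum>b<d. R a b * cnj (R a b))
       - (\<Sum>a<d. of_real (1/d) * (R a a + cnj (R a a)) - of_real (1/d^2))"
      unfolding e by (simp add: sum_subtractf sum.delta)
    also have "(\<Sum>a<d. of_real (1/d) * (R a a + cnj (R a a)) - of_real (1/d^2)) =
       of_real (1/d) * ((\<Sum>a<d. R a a) + cnj (\<Sum>a<d. R a a)) - of_real (d * (1/d^2))"
      by (simp add: sum_subtractf sum_distrib_left sum.distrib cnj_sum sum_divide_distrib[symmetric])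
    also have "\<dots> = of_real (1/d)" using tr dpos by (simp add: power2_eq_square)
    finally have "(\<Sum>a<d. \<Sum>b<d. W a b * cnj (W a b)) = (\<Sum>a<d. \<Sum>b<d. R a b * cnj (R a b)) - of_real (1/d)" .
    moreover have "Re (R a b * cnj (R a b)) = (cmod (R a b))^2" for a b
      using complex_norm_square[of "R a b"] by (metis Re_complex_of_real)
    ultimately show ?thesis by (simp add: Re_sum)
  qed
  have "0 \<le> Re (\<Sum>a<d. \<Sum>b<d. (W a b - Y a b) * cnj (W a b - Y a b))"
    using norm_sum_nonneg[of "\<lambda>a b. W a b - Y a b"] by simp
  also have "(\<Sum>a<d. \<Sum>b<d. (W a b - Y a b) * cnj (W a b - Y a b)) =
     (\<Sum>a<d. \<Sum>b<d. W a b * cnj (W a b)) - (\<Sum>a<d. \<Sum>b<d. W a b * cnj (Y a b))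
     - cnj (\<Sum>a<d. \<Sum>b<d. W a b * cnj (Y a b)) + (\<Sum>a<d. \<Sum>b<d. Y a b * cnj (Y a b))"
    by (simp add: algebra_simps sum_subtractf sum.distrib cnj_sum)
  finally show ?thesis unfolding S1 S23 using S4 by simp
qed

lemma real_of_cnj: assumes "cnj z = z" shows "z = of_real (Re z)"
proof -
  have "Im (cnj z) = Im z" using assms by simp
  hence "Im z = 0" by simp
  thus ?thesis by (simp add: complex_eq_iff)
qed

lemma lin_two:
  fixes f :: "nat \<Rightarrow> complex"
  assumes "a < d" "b < d" "a \<noteq> b"
  shows "(\<Sum>c<d. f c * ((if c = a then \<alpha> else 0) + (if c = b then \<beta> else 0))) = f a * \<alpha> + f b * \<beta>"
proof -
  have "(\<Sum>c<d. f c * ((if c = a then \<alpha> else 0) + (if c = b then \<beta> else 0))) =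
    (\<Sum>c<d. (if c = a then f a * \<alpha> else 0) + (if c = b then f b * \<beta> else 0))"
    using assms by (intro sum.cong refl) auto
  also have "\<dots> = f a * \<alpha> + f b * \<beta>" using assms by (simp add: sum.distrib sum.delta)
  finally show ?thesis .
qed

lemma lin_two':
  fixes f :: "nat \<Rightarrow> complex"
  assumes "a < d" "b < d" "a \<noteq> b"
  shows "(\<Sum>c<d. cnj ((if c = a then \<alpha> else 0) + (if c = b then \<beta> else 0)) * f c) = cnj \<alpha> * f a + cnj \<beta> * f b"
proof -
  have "(\<Sum>c<d. cnj ((if c = a then \<alpha> else 0) + (if c = b then \<beta> else 0)) * f c) =
    (\<Sum>c<d. (if c = a then cnj \<alpha> * f a else 0) + (if c = b then cnj \<beta> * f b else 0))"
    using assms by (intro sum.cong refl) auto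
  also have "\<dots> = cnj \<alpha> * f a + cnj \<beta> * f b" using assms by (simp add: sum.distrib sum.delta)
  finally show ?thesis .
qed

lemma qform_two:
  assumes "a < d" "b < d" "a \<noteq> b"
  shows "qform d R (\<lambda>c. (if c = a then \<alpha> else 0) + (if c = b then \<beta> else 0)) =
    cnj \<alpha> * (R a a * \<alpha> + R a b * \<beta>) + cnj \<beta> * (R b a * \<alpha> + R b b * \<beta>)"
proof -
  let ?u = "\<lambda>c. (if c = a then \<alpha> else 0) + (if c = b then \<beta> else 0)"
  have "qform d R ?u = (\<Sum>c<d. cnj (?u c) * (\<Sum>c'<d. R c c' * ?u c'))"
    unfolding qform_def by (simp add: sum_distrib_left mult.assoc)
  also have "\<dots> = (\<Sum>c<d. cnj (?u c) * (R c a * \<alpha> + R c b * \<beta>))"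
    using lin_two[OF assms] by simp
  also have "\<dots> = cnj \<alpha> * (R a a * \<alpha> + R a b * \<beta>) + cnj \<beta> * (R b a * \<alpha> + R b b * \<beta>)"
    by (rule lin_two'[OF assms])
  finally show ?thesis .
qed

lemma purity:
  assumes gs: "good_state d R" and d2: "d \<ge> 2"
  shows "(\<Sum>a<d. \<Sum>b<d. (cmod (R a b))^2) \<le> 1"
proof -
  have herm: "\<And>a a'. a<d \<Longrightarrow> a'<d \<Longrightarrow> R a' a = cnj (R a a')"
    and psd: "\<And>u. Re (qform d R u) \<ge> 0" and tr: "(\<Sum>a<d. R a a) = 1"
    using gs unfolding good_state_def by blast+
  define A where "A a = Re (R a a)" for a
  have diag: "R a a = of_real (A a)" if "a < d" for a
    unfolding A_def by (rule real_of_cnj, rule sym, rule herm[OF that that])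
  have Apos: "A a \<ge> 0" if a: "a < d" for a
  proof -
    define b where "b = (if a = 0 then 1 else 0::nat)"
    have b: "b < d" "a \<noteq> b" unfolding b_def using d2 by auto
    have "qform d R (\<lambda>c. (if c = a then 1 else 0) + (if c = b then 0 else 0)) = R a a"
      using qform_two[OF a b(1) b(2), of R 1 0] by simp
    thus ?thesis using psd[of "\<lambda>c. (if c = a then 1 else 0) + (if c = b then 0 else 0)"] unfolding A_def by simp
  qed
  have off: "(cmod (R a b))^2 \<le> A a * A b" if ab: "a < d" "b < d" for a b
  proof (cases "a = b")
    case True
    then show ?thesis using diag[OF ab(1)] Apos[OF ab(1)] by (simp add: power2_eq_square)
  next
    case False
    define z where "z = R a b"
    have Rba: "R b a = cnj z" unfolding z_def by (rule herm[OF ab])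
    have Q: "Re (qform d R (\<lambda>c. (if c = a then \<alpha> else 0) + (if c = b then \<beta> else 0))) =
      Re (cnj \<alpha> * (of_real (A a) * \<alpha> + z * \<beta>) + cnj \<beta> * (cnj z * \<alpha> + of_real (A b) * \<beta>))" for \<alpha> \<beta>
      using qform_two[OF ab False, of R \<alpha> \<beta>] diag ab Rba unfolding z_def by simp
    show ?thesis
    proof (cases "A b > 0")
      case True
      have "0 \<le> Re (cnj (of_real (A b)) * (of_real (A a) * of_real (A b) + z * (- cnj z)) + cnj (- cnj z) * (cnj z * of_real (A b) + of_real (A b) * (- cnj z)))"
        by (subst Q[symmetric]) (rule psd)
      also have "\<dots> = A b * (A a * A b - (cmod z)^2)"
        unfolding cmod_power2 by (simp add: algebra_simps power2_eq_square)
      finally have "0 \<le> A a * A b - (cmod z)^2" using True by (simp add: zero_le_mult_iff)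
      thus ?thesis unfolding z_def by simp
    next
      case False
      hence Ab: "A b = 0" using Apos[OF ab(2)] by simp
      have "z = 0"
      proof (rule ccontr)
        assume "z \<noteq> 0"
        hence cz: "(cmod z)^2 > 0" by simp
        define t where "t = (A a + 1) / (2 * (cmod z)^2)"
        have "0 \<le> Re (cnj 1 * (of_real (A a) * 1 + z * (- of_real t * cnj z)) + cnj (- of_real t * cnj z) * (cnj z * 1 + of_real (A b) * (- of_real t * cnj z)))"
          by (subst Q[symmetric]) (rule psd)
        also have "\<dots> = A a - 2 * t * (cmod z)^2"
          using Ab unfolding cmod_power2 by (simp add: algebra_simps power2_eq_square)
        also have "\<dots> = -1" unfolding t_def using cz by (simp add: field_simps)
        finally show False by simp
      qed
      thus ?thesis using Ab unfolding z_def by simp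
    qed
  qed
  have "(\<Sum>a<d. \<Sum>b<d. (cmod (R a b))^2) \<le> (\<Sum>a<d. \<Sum>b<d. A a * A b)"
    by (intro sum_mono off) auto
  also have "\<dots> = (\<Sum>a<d. A a) * (\<Sum>b<d. A b)" by (simp add: sum_product)
  also have "(\<Sum>a<d. A a) = 1" unfolding A_def Re_sum[symmetric] tr by simp
  finally show ?thesis by simp
qed

lemma qform_real:
  assumes "good_state d R"
  shows "qform d R u = of_real (Re (qform d R u))"
proof -
  have herm: "\<And>a a'. a<d \<Longrightarrow> a'<d \<Longrightarrow> R a' a = cnj (R a a')"
    using assms unfolding good_state_def by blast
  have "cnj (qform d R u) = (\<Sum>a<d. \<Sum>a'<d. u a * cnj (R a a') * cnj (u a'))"
    unfolding qform_def by (simp add: cnj_sum)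
  also have "\<dots> = (\<Sum>a<d. \<Sum>a'<d. cnj (u a') * R a' a * u a)"
  proof (intro sum.cong refl)
    fix a a' assume "a \<in> {..<d}" "a' \<in> {..<d}"
    hence h: "R a' a = cnj (R a a')" by (intro herm) auto
    show "u a * cnj (R a a') * cnj (u a') = cnj (u a') * R a' a * u a" unfolding h by simp
  qed
  also have "\<dots> = qform d R u" unfolding qform_def by (rule sum.swap)
  finally show ?thesis by (rule real_of_cnj)
qed

lemma ent_collision:
  fixes q :: "'a \<Rightarrow> real"
  assumes fin: "finite J" and nn: "\<And>j. j \<in> J \<Longrightarrow> q j \<ge> 0" and s1: "(\<Sum>j\<in>J. q j) = 1"
  shows "(\<Sum>j\<in>J. q j ^ 2) > 0" and "(\<Sum>j\<in>J. ent (q j)) \<ge> - log 2 (\<Sum>j\<in>J. q j ^ 2)"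
proof -
  define c where "c = (\<Sum>j\<in>J. q j ^ 2)"
  have c0: "c \<ge> 0" unfolding c_def by (intro sum_nonneg) simp
  have "c \<noteq> 0"
  proof
    assume "c = 0"
    hence "\<forall>j\<in>J. q j ^ 2 = 0" unfolding c_def using fin by (subst (asm) sum_nonneg_eq_0_iff) auto
    hence "(\<Sum>j\<in>J. q j) = 0" by simp
    thus False using s1 by simp
  qed
  hence cpos: "c > 0" using c0 by simp
  thus "(\<Sum>j\<in>J. q j ^ 2) > 0" unfolding c_def .
  define h where "h j = (if q j > 0 then q j * ln (q j) else 0)" for j
  have hb: "h j - q j * ln c \<le> q j ^ 2 / c - q j" if j: "j \<in> J" for j
  proof (cases "q j > 0")
    case True
    have "ln (q j / c) \<le> q j / c - 1" using True cpos by (intro ln_le_minus_one) simp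
    hence "ln (q j) - ln c \<le> q j / c - 1" using True cpos by (simp add: ln_div)
    hence "q j * (ln (q j) - ln c) \<le> q j * (q j / c - 1)" using True by (intro mult_left_mono) auto
    thus ?thesis unfolding h_def using True by (simp add: algebra_simps power2_eq_square)
  next
    case False
    hence "q j = 0" using nn[OF j] by simp
    thus ?thesis unfolding h_def by simp
  qed
  have "(\<Sum>j\<in>J. h j - q j * ln c) \<le> (\<Sum>j\<in>J. q j ^ 2 / c - q j)"
    by (intro sum_mono hb)
  also have "\<dots> = 0" using s1 cpos by (simp add: sum_subtractf sum_divide_distrib[symmetric] c_def)
  finally have "(\<Sum>j\<in>J. h j) \<le> ln c" using s1 by (simp add: sum_subtractf sum_distrib_right[symmetric])
  moreover have "ent (q j) = - h j / ln 2" if "j \<in> J" for j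
    unfolding ent_def h_def log_def by auto
  ultimately have "(\<Sum>j\<in>J. ent (q j)) = - (\<Sum>j\<in>J. h j) / ln 2"
    by (simp add: sum_divide_distrib[symmetric] sum_negf)
  also have "\<dots> \<ge> - ln c / ln 2" using \<open>(\<Sum>j\<in>J. h j) \<le> ln c\<close> by (simp add: divide_right_mono)
  finally show "(\<Sum>j\<in>J. ent (q j)) \<ge> - log 2 (\<Sum>j\<in>J. q j ^ 2)" unfolding c_def log_def by simp
qed

lemma log_concave_sum:
  fixes c :: "'a \<Rightarrow> real"
  assumes fin: "finite I" and ne: "I \<noteq> {}" and pos: "\<And>i. i \<in> I \<Longrightarrow> c i > 0"
  shows "(\<Sum>i\<in>I. - log 2 (c i)) \<ge> - real (card I) * log 2 ((\<Sum>i\<in>I. c i) / card I)"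
proof -
  define m where "m = (\<Sum>i\<in>I. c i) / card I"
  have n: "card I > 0" using fin ne by (simp add: card_gt_0_iff)
  have "(\<Sum>i\<in>I. c i) > 0" using fin ne pos by (intro sum_pos) auto
  hence mpos: "m > 0" unfolding m_def using n by simp
  have b: "ln (c i) - ln m \<le> c i / m - 1" if "i \<in> I" for i
    using ln_le_minus_one[of "c i / m"] pos[OF that] mpos by (simp add: ln_div)
  have "(\<Sum>i\<in>I. ln (c i) - ln m) \<le> (\<Sum>i\<in>I. c i / m - 1)" by (intro sum_mono b)
  also have "\<dots> = (\<Sum>i\<in>I. c i) / m - card I" by (simp add: sum_subtractf sum_divide_distrib)
  also have "\<dots> = 0" using mpos n \<open>(\<Sum>i\<in>I. c i) > 0\<close> unfolding m_def by (simp add: field_simps)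
  finally have "(\<Sum>i\<in>I. ln (c i)) \<le> card I * ln m" by (simp add: sum_subtractf)
  hence "(\<Sum>i\<in>I. ln (c i)) / ln 2 \<le> card I * ln m / ln 2" by (simp add: divide_right_mono)
  thus ?thesis unfolding m_def[symmetric] log_def by (simp add: sum_negf sum_divide_distrib[symmetric])
qed

lemma qform_nonneg: "good_state d R \<Longrightarrow> Re (qform d R u) \<ge> 0"
  unfolding good_state_def by blast

lemma sum_x_one:
  assumes gs: "good_state d R" and ob: "orthonormal_basis d b"
  shows "(\<Sum>j<d. Re (qform d R (\<lambda>a. b j $ a))) = 1"
proof -
  have tr: "(\<Sum>a<d. R a a) = 1" using gs unfolding good_state_def by blast
  have "(\<Sum>j<d. qform d R (\<lambda>a. b j $ a)) = (\<Sum>j<d. \<Sum>a<d. \<Sum>a'<d. R a a' * (b j $ a' * cnj (b j $ a)))"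
    unfolding qform_def by (simp add: ac_simps)
  also have "\<dots> = (\<Sum>a<d. \<Sum>a'<d. \<Sum>j<d. R a a' * (b j $ a' * cnj (b j $ a)))"
    by (rule swap3[symmetric])
  also have "\<dots> = (\<Sum>a<d. \<Sum>a'<d. (if a' = a then R a a' else 0))"
    by (intro sum.cong refl) (simp add: sum_distrib_left[symmetric] completeness[OF ob])
  also have "\<dots> = (\<Sum>a<d. R a a)"
    by (intro sum.cong refl) (simp add: sum.delta cong: if_cong)
  finally show ?thesis using tr by (simp add: Re_sum[symmetric])
qed

lemma uncert:
  assumes d2: "d \<ge> 2" and gs: "good_state d R"
    and ob: "\<forall>i\<in>{1..d+1}. orthonormal_basis d (M i)"
    and mu: "\<forall>i\<in>{1..d+1}. \<forall>i'\<in>{1..d+1}. i \<noteq> i' \<longrightarrow> mutually_unbiased d (M i) (M i')"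
  shows "(\<Sum>i=1..d+1. \<Sum>j<d. ent (Re (qform d R (\<lambda>a. M i j $ a)))) \<ge> (real d + 1) * (log 2 (real d) - 1)"
proof -
  define I where "I = {1..d+1}"
  define K where "K = I \<times> {..<d}"
  define v where "v p a = M (fst p) (snd p) $ a" for p a
  define x where "x p = Re (qform d R (v p))" for p
  define y where "y p = x p - 1 / real d" for p
  define g where "g p q = (if fst p = fst q then (if snd p = snd q then 1 else 0) else 1 / real d)" for p q :: "nat \<times> nat"
  have dpos: "d > 0" using d2 by simp
  have finK: "finite K" unfolding K_def I_def by simp
  have cardK: "card K = (d+1) * d" unfolding K_def I_def by (simp add: card_cartesian_product)
  have obi: "orthonormal_basis d (M i)" if "i \<in> I" for i using ob that unfolding I_def by blast
  have ipv: "(\<Sum>a<d. v p a * cnj (v q a)) = M (fst p) (snd p) \<bullet>c M (fst q) (snd q)" if "p \<in> K" "q \<in> K" for p q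
    unfolding v_def using obi that unfolding K_def orthonormal_basis_def
    by (subst cscalar_expand[of _ d]) auto
  have ip: "(\<Sum>a<d. v p a * cnj (v q a)) * cnj (\<Sum>a<d. v p a * cnj (v q a)) = of_real (g p q)"
    if pq: "p \<in> K" "q \<in> K" for p q
  proof (cases "fst p = fst q")
    case True
    then show ?thesis unfolding ipv[OF pq] g_def using obi pq unfolding K_def orthonormal_basis_def
      by (auto simp: True)
  next
    case False
    have "(cmod (M (fst p) (snd p) \<bullet>c M (fst q) (snd q)))^2 = 1 / real d"
      using mu False pq unfolding K_def I_def mutually_unbiased_def by auto
    then show ?thesis unfolding ipv[OF pq] g_def using False
      by (simp flip: complex_norm_square)
  qed
  have nrm: "(\<Sum>a<d. v p a * cnj (v p a)) = 1" if "p \<in> K" for p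
    using ipv[OF that that] obi that unfolding K_def orthonormal_basis_def by auto
  have xsum: "(\<Sum>j<d. x (i, j)) = 1" if "i \<in> I" for i
    unfolding x_def v_def using sum_x_one[OF gs obi[OF that]] by simp
  have xnn: "x p \<ge> 0" for p unfolding x_def by (rule qform_nonneg[OF gs])
  have ysum: "(\<Sum>j<d. y (i, j)) = 0" if "i \<in> I" for i
    unfolding y_def using xsum[OF that] dpos by (simp add: sum_subtractf)
  have sumK: "(\<Sum>p\<in>K. f p) = (\<Sum>i\<in>I. \<Sum>j<d. f (i, j))" for f :: "nat \<times> nat \<Rightarrow> real"
    unfolding K_def by (simp add: sum.cartesian_product)
  have sumy: "(\<Sum>p\<in>K. y p) = 0" unfolding sumK using ysum by simp
  have yg: "(\<Sum>q\<in>K. y q * g p q) = y p" if p: "p \<in> K" for p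
  proof -
    obtain i j where pij: "p = (i, j)" "i \<in> I" "j < d" using p unfolding K_def by auto
    have "(\<Sum>q\<in>K. y q * g p q) = (\<Sum>i'\<in>I. \<Sum>j'<d. y (i', j') * g (i, j) (i', j'))"
      unfolding sumK pij(1) ..
    also have "\<dots> = (\<Sum>i'\<in>I. if i' = i then y (i, j) else 0)"
    proof (intro sum.cong refl)
      fix i' assume i': "i' \<in> I"
      show "(\<Sum>j'<d. y (i', j') * g (i, j) (i', j')) = (if i' = i then y (i, j) else 0)"
      proof (cases "i' = i")
        case True
        have "y (i', j') * g (i, j) (i', j') = (if j' = j then y (i, j) else 0)" for j'
          unfolding g_def using True by auto
        then show ?thesis using pij True by (simp add: sum.delta)
      next
        case False
        then have "(\<Sum>j'<d. y (i', j') * g (i, j) (i', j')) = (\<Sum>j'<d. y (i', j')) / d"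
          unfolding g_def by (simp add: sum_divide_distrib)
        then show ?thesis using ysum[OF i'] False by simp
      qed
    qed
    also have "\<dots> = y p" using pij unfolding I_def by (simp add: sum.delta)
    finally show ?thesis .
  qed
  have xdef: "qform d R (v p) = of_real (y p + 1/d)" for p
    unfolding y_def x_def using qform_real[OF gs] by simp
  have tr: "(\<Sum>a<d. R a a) = 1" using gs unfolding good_state_def by blast
  have bes: "(\<Sum>p\<in>K. (y p)^2) \<le> (\<Sum>a<d. \<Sum>b<d. (cmod (R a b))^2) - 1/d"
    by (rule bessel[OF finK dpos ip yg nrm sumy xdef tr])
  have x2: "(\<Sum>p\<in>K. (x p)^2) \<le> 2"
  proof -
    have "(\<Sum>p\<in>K. (x p)^2) = (\<Sum>p\<in>K. (y p)^2 + 2 / d * y p + 1 / d^2)"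
      unfolding y_def using dpos by (intro sum.cong refl) (simp add: power2_eq_square field_simps)
    also have "\<dots> = (\<Sum>p\<in>K. (y p)^2) + 2 / d * (\<Sum>p\<in>K. y p) + card K / d^2"
      by (simp add: sum.distrib sum_distrib_left)
    also have "\<dots> = (\<Sum>p\<in>K. (y p)^2) + (d + 1) / d"
      unfolding sumy cardK using dpos by (simp add: power2_eq_square field_simps)
    also have "\<dots> \<le> 1 - 1/d + (d+1)/d" using bes purity[OF gs d2] by simp
    also have "\<dots> = 2" using dpos by (simp add: field_simps)
    finally show ?thesis .
  qed
  define c where "c i = (\<Sum>j<d. (x (i, j))^2)" for i
  have cpos: "c i > 0" and ent_i: "(\<Sum>j<d. ent (x (i, j))) \<ge> - log 2 (c i)" if "i \<in> I" for i
    using ent_collision[of "{..<d}" "\<lambda>j. x (i, j)"] xnn xsum[OF that] unfolding c_def by auto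
  have csum: "(\<Sum>i\<in>I. c i) \<le> 2" using x2 unfolding c_def sumK by simp
  have cardI: "card I = d + 1" unfolding I_def by simp
  have e0: "(\<Sum>i=1..d+1. \<Sum>j<d. ent (Re (qform d R (\<lambda>a. M i j $ a)))) = (\<Sum>i\<in>I. \<Sum>j<d. ent (x (i, j)))"
    unfolding I_def x_def v_def by simp
  have e1: "(\<Sum>i\<in>I. - log 2 (c i)) \<le> (\<Sum>i\<in>I. \<Sum>j<d. ent (x (i, j)))" by (intro sum_mono ent_i)
  have e2: "- real (card I) * log 2 ((\<Sum>i\<in>I. c i) / card I) \<le> (\<Sum>i\<in>I. - log 2 (c i))"
    by (rule log_concave_sum) (use cpos in \<open>auto simp: I_def\<close>)
  have e3: "- (real d + 1) * log 2 (2 / (real d + 1)) \<le> - real (card I) * log 2 ((\<Sum>i\<in>I. c i) / card I)"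
  proof -
    have "(\<Sum>i\<in>I. c i) > 0" using cpos by (intro sum_pos) (auto simp: I_def)
    have rc: "real (card I) = real d + 1" using cardI by simp
    have L: "log 2 ((\<Sum>i\<in>I. c i) / (real d + 1)) \<le> log 2 (2 / (real d + 1))"
      using csum \<open>(\<Sum>i\<in>I. c i) > 0\<close> by (subst log_le_cancel_iff) (auto simp: divide_right_mono)
    have "- (real d + 1) * log 2 (2 / (real d + 1)) \<le> - (real d + 1) * log 2 ((\<Sum>i\<in>I. c i) / (real d + 1))"
      by (rule mult_left_mono_neg[OF L]) simp
    thus ?thesis unfolding rc .
  qed
  have e4: "- (real d + 1) * log 2 (2 / (real d + 1)) = (real d + 1) * (log 2 (real d + 1) - 1)"
    by (simp add: log_divide algebra_simps)
  have e5: "(real d + 1) * (log 2 (real d) - 1) \<le> (real d + 1) * (log 2 (real d + 1) - 1)"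
    using dpos by (intro mult_left_mono) auto
  show ?thesis using e0 e1 e2 e3 e4 e5 by linarith
qed


theorem proposition2:
  fixes d :: nat and M :: "nat \<Rightarrow> nat \<Rightarrow> complex vec" and \<rho> :: "complex mat"
  assumes "prime d"
    and "\<forall>i\<in>{1..d+1}. orthonormal_basis d (M i)"
    and "\<forall>i\<in>{1..d+1}. \<forall>i'\<in>{1..d+1}. i \<noteq> i' \<longrightarrow> mutually_unbiased d (M i) (M i')"
    and ECQC: "\<forall>\<sigma>. density_matrix (d*d) \<sigma> \<longrightarrow>
       qmi d \<sigma> \<ge> Min {(\<Sum>i\<in>S. classical_mi d \<sigma> (M i)) | S. S \<subseteq> {1..d+1} \<and> card S = d}"
    and "density_matrix (d*d) \<rho>"
  shows "(\<Sum>i=1..d+1. joint_meas_entropy d \<rho> (M i)) \<ge>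
     2 * ((real d + 1) * (log 2 (real d) - 1)) - qmi d \<rho>
       - Max {classical_mi d \<rho> (M i) | i. i \<in> {1..d+1}}"
proof -
  note ob = assms(2) and mu = assms(3) and dm = assms(5)
  have d2: "d \<ge> 2" using assms(1) by (rule prime_ge_2_nat)
  have r: "\<rho> \<in> carrier_mat (d*d) (d*d)" using dm unfolding density_matrix_def by blast
  define I where "I = {1..d+1}"
  define cm where "cm i = classical_mi d \<rho> (M i)" for i
  have finI: "finite I" unfolding I_def by simp
  have cardI: "card I = d + 1" unfolding I_def by simp
  have joint: "joint_meas_entropy d \<rho> (M i) = meas_entropy_A d \<rho> (M i) + meas_entropy_B d \<rho> (M i) - cm i" for i
    unfolding cm_def classical_mi_def by simp
  have mA: "meas_entropy_A d \<rho> (M i) = (\<Sum>j<d. ent (Re (qform d (RA d \<rho>) (\<lambda>a. M i j $ a))))" if "i \<in> I" for i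
    unfolding meas_entropy_A_def using marginal_A[OF r] ob that unfolding I_def by simp
  have mB: "meas_entropy_B d \<rho> (M i) = (\<Sum>j<d. ent (Re (qform d (RB d \<rho>) (\<lambda>a. M i j $ a))))" if "i \<in> I" for i
    unfolding meas_entropy_B_def using marginal_B[OF r] ob that unfolding I_def by simp
  have UA: "(\<Sum>i\<in>I. meas_entropy_A d \<rho> (M i)) \<ge> (real d + 1) * (log 2 (real d) - 1)"
    using uncert[OF d2 good_RA[OF dm] ob mu] mA unfolding I_def by simp
  have UB: "(\<Sum>i\<in>I. meas_entropy_B d \<rho> (M i)) \<ge> (real d + 1) * (log 2 (real d) - 1)"
    using uncert[OF d2 good_RB[OF dm] ob mu] mB unfolding I_def by simp
  define CM where "CM = {classical_mi d \<rho> (M i) | i. i \<in> {1..d+1}}"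
  have CMeq: "CM = cm ` I" unfolding CM_def cm_def I_def by auto
  have finCM: "finite CM" unfolding CMeq using finI by simp
  have cmle: "cm i \<le> Max CM" if "i \<in> I" for i
    using finCM that unfolding CMeq by (intro Max_ge) auto
  define MS where "MS = {(\<Sum>i\<in>S. classical_mi d \<rho> (M i)) | S. S \<subseteq> {1..d+1} \<and> card S = d}"
  have MSeq: "MS = (\<lambda>S. \<Sum>i\<in>S. cm i) ` {S. S \<subseteq> I \<and> card S = d}"
    unfolding MS_def cm_def I_def by auto
  have finMS: "finite MS" unfolding MSeq
    by (rule finite_imageI, rule finite_subset[of _ "Pow I"]) (use finI in auto)
  have "{1..d} \<in> {S. S \<subseteq> I \<and> card S = d}" unfolding I_def by auto
  hence neMS: "MS \<noteq> {}" unfolding MSeq by blast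
  have lb: "(\<Sum>i\<in>I. cm i) - Max CM \<le> m" if mMS: "m \<in> MS" for m
  proof -
    obtain S where S: "S \<subseteq> I" "card S = d" and m: "m = (\<Sum>i\<in>S. cm i)"
      using mMS unfolding MSeq by auto
    have "card (I - S) = 1" using S finI cardI by (simp add: card_Diff_subset finite_subset)
    then obtain k where k: "I - S = {k}" by (rule card_1_singletonE)
    have kI: "k \<in> I" using k by auto
    have "(\<Sum>i\<in>I. cm i) = (\<Sum>i\<in>I - S. cm i) + (\<Sum>i\<in>S. cm i)"
      by (rule sum.subset_diff[OF S(1) finI])
    also have "\<dots> = cm k + m" unfolding k m by simp
    finally show ?thesis using cmle[OF kI] by simp
  qed
  have "Min MS \<ge> (\<Sum>i\<in>I. cm i) - Max CM"
    using finMS neMS lb by (simp add: Min_ge_iff)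
  moreover have "qmi d \<rho> \<ge> Min MS" using ECQC dm unfolding MS_def by blast
  ultimately have QM: "(\<Sum>i\<in>I. cm i) \<le> qmi d \<rho> + Max CM" by simp
  have "(\<Sum>i=1..d+1. joint_meas_entropy d \<rho> (M i)) =
    (\<Sum>i\<in>I. meas_entropy_A d \<rho> (M i)) + (\<Sum>i\<in>I. meas_entropy_B d \<rho> (M i)) - (\<Sum>i\<in>I. cm i)"
    unfolding joint I_def by (simp add: sum.distrib sum_subtractf)
  thus ?thesis using UA UB QM unfolding CM_def by linarith
qed

end
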